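(* Fix a finite alphabet $\mathcal{X}$, integers $M_1\ge M_2\ge1$, reals $\alpha,\beta>0$ and $\lambda_1,\lambda_2>0$; let $\xi_N=\lceil\alpha N\rceil$, $\chi_N=\lceil\beta N\rceil$. For each $N$ consider the one-step fixed-length test $\Phi_{\mathrm{FL},N}^{\mathrm{uk}}$ which observes $(\mathbf{X}^{\xi_N},\mathbf{Y}^{\chi_N})$, forms for each $(h,t)\in\mathcal{M}$ the events $\mathcal{B}_{h,t}^N=\{\mathrm{S}_t^h(\mathbf{X}^{\xi_N},\mathbf{Y}^{\chi_N})\le\lambda_1\}\cap\{\min_{\bar t\in[T_h],\bar t\ne t}\mathrm{S}_{\bar t}^h(\mathbf{X}^{\xi_N},\mathbf{Y}^{\chi_N})>\lambda_2\}$, and decides $\mathrm{H}_l^K$ if $\mathcal{B}_{K,l}^N\cap\bigcap_{(h,t)\in\mathcal{M},(h,t)\ne(K,l)}(\mathcal{B}_{h,t}^N)^c$ occurs for some $(K,l)\in\mathcal{M}$, and $\mathrm{H}_{\mathrm{r}}$ otherwise. Then: (i) for every $(P^{M_1},Q^{M_2})\in\mathcal{P}_0$, $\liminf_{N\to\infty}-\frac1N\log\eta(\Phi_{\mathrm{FL},N}^{\mathrm{uk}}|P^{M_1},Q^{M_2})\ge E_{\mathrm{r}}(\lambda_1,P^{M_1},Q^{M_2})$; (ii) for every $(K,l)\in\mathcal{M}$ and every $(P^{M_1},Q^{M_2})\in\mathcal{P}_l^K$, $\liminf_{N\to\infty}-\frac1N\log\bar\beta(\Phi_{\mathrm{FL},N}^{\mathrm{uk}}|P^{M_1},Q^{M_2})\ge\min\{G(\lambda_1,P^{M_1},Q^{M_2}),\lambda_2\}$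 and $\liminf_{N\to\infty}-\frac1N\log\zeta(\Phi_{\mathrm{FL},N}^{\mathrm{uk}}|P^{M_1},Q^{M_2})\ge\min\{\lambda_1,\lambda_2,G(\lambda_1,P^{M_1},Q^{M_2}),F(\lambda_2,P^{M_1},Q^{M_2})\}$.
   Context: Model: $\mathcal{P}(\mathcal{X})$ is the set of distributions on $\mathcal{X}$. For $i\in[M_1]$, $X_i^{\xi_N}=(X_{i,1},\dots,X_{i,\xi_N})$ i.i.d. $P_i$; for $j\in[M_2]$, $Y_j^{\chi_N}$ i.i.d. $Q_j$; all independent; within each database distributions are distinct. For $K\in[M_2]$, a $K$-match is a set of $K$ pairs in $[M_1]\times[M_2]$ with no two sharing a first or second coordinate; there are $T_K=\binom{M_1}{K}\binom{M_2}{K}K!$, enumerated $\mathcal{M}_1^K,\dots,\mathcal{M}_{T_K}^K$; $\mathcal{M}:=\{(h,t):h\in[M_2],t\in[T_h]\}$. Hypothesis $\mathrm{H}_l^K$: $(P^{M_1},Q^{M_2})\in\mathcal{P}_l^K:=\{\tilde P_i=\tilde Q_j\text{ iff }(i,j)\in\mathcal{M}_l^K\}$ (probability $\mathbb{P}_l^K$); null hypothesis $\mathrm{H}_{\mathrm{r}}$: $(P^{M_1},Q^{M_2})\in\mathcal{P}_0:=\{\tilde P_i\ne\tilde Q_j\ \forall i,j\}$ (probability $\mathbb{P}_{\mathrm{r}}$). Error probabilities of a test with decision $\phi$: under $\mathrm{H}_l^K$, mismatch $\bar\beta=\mathbb{P}_l^K\{\phi\notin\{\mathrm{H}_l^K,\mathrm{H}_{\mathrm{r}}\}\}$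 and false reject $\zeta=\mathbb{P}_l^K\{\phi=\mathrm{H}_{\mathrm{r}}\}$; under $\mathrm{H}_{\mathrm{r}}$, false alarm $\eta=\mathbb{P}_{\mathrm{r}}\{\phi\ne\mathrm{H}_{\mathrm{r}}\}$. Notation: $\hat T_{x^n}$ is the type of $x^n$; $D$ is KL divergence; $R_{\alpha,\beta}^{P,Q}=\frac{\alpha P+\beta Q}{\alpha+\beta}$; $\mathrm{GJS}(P,Q,\alpha,\beta)=\alpha D(P\|R_{\alpha,\beta}^{P,Q})+\beta D(Q\|R_{\alpha,\beta}^{P,Q})$; $\mathrm{G}_t^h(P^{M_1},Q^{M_2},\alpha,\beta)=\sum_{(i,j)\in\mathcal{M}_t^h}\mathrm{GJS}(P_i,Q_j,\alpha,\beta)$; $\mathrm{S}_t^h(\mathbf{x}^{\xi_N},\mathbf{y}^{\chi_N})=\mathrm{G}_t^h((\hat T_{x_i^{\xi_N}})_i,(\hat T_{y_j^{\chi_N}})_j,\alpha,\beta)$; $E(P^{M_1},Q^{M_2},\Omega^{M_1},\Psi^{M_2},\alpha,\beta)=\sum_i\alpha D(\Omega_i\|P_i)+\sum_j\beta D(\Psi_j\|Q_j)$. $E_{\mathrm{r}}(\lambda,P^{M_1},Q^{M_2})=\min_{(h,t)\in\mathcal{M}}\min_{(\Omega^{M_1},\Psi^{M_2})\in\mathcal{P}(\mathcal{X})^{M_1+M_2}:\mathrm{G}_t^h(\Omega^{M_1},\Psi^{M_2},\alpha,\beta)\le\lambda}E(\cdot)$. For $(P^{M_1},Q^{M_2})\in\mathcal{P}_l^K$: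 $G(\lambda,P^{M_1},Q^{M_2})=\min_{(h,t)\in\mathcal{M}:h>K}\min_{(\Omega^{M_1},\Psi^{M_2}):\mathrm{G}_t^h(\Omega^{M_1},\Psi^{M_2},\alpha,\beta)\le\lambda}E(P^{M_1},Q^{M_2},\Omega^{M_1},\Psi^{M_2},\alpha,\beta)$ (minimum over an empty set is $+\infty$), and $F(\lambda,P^{M_1},Q^{M_2})=\min_{(t_1,t_2)\in[T_K]^2,t_1\ne t_2}\min_{(\Omega^{M_1},\Psi^{M_2}):\mathrm{G}_{t_1}^K(\Omega^{M_1},\Psi^{M_2},\alpha,\beta)\le\lambda,\ \mathrm{G}_{t_2}^K(\Omega^{M_1},\Psi^{M_2},\alpha,\beta)\le\lambda}E(P^{M_1},Q^{M_2},\Omega^{M_1},\Psi^{M_2},\alpha,\beta)$. *)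

theory Defs
  imports Complex_Main "HOL-Library.Extended_Real" "HOL-Library.FuncSet" "HOL-Library.Liminf_Limsup"
begin

text \<open>A database of M distributions is a function
  nat => ('a => real), used on the indices {..<M} (i.e. [M] shifted to start at 0).\<close>

definition is_dist :: "('a::finite \<Rightarrow> real) \<Rightarrow> bool" where
  "is_dist P \<longleftrightarrow> (\<forall>x. 0 \<le> P x) \<and> sum P UNIV = 1"

definition KL :: "('a::finite \<Rightarrow> real) \<Rightarrow> ('a \<Rightarrow> real) \<Rightarrow> ereal" where
  "KL P Q = (\<Sum>x\<in>UNIV. if P x = 0 then 0 else if Q x = 0 then \<infinity>
                         else ereal (P x * ln (P x / Q x)))"

definition mixR :: "real \<Rightarrow> real \<Rightarrow> ('a \<Rightarrow> real) \<Rightarrow> ('a \<Rightarrow> real) \<Rightarrow> 'a \<Rightarrow> real" where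
  "mixR \<alpha> \<beta> P Q = (\<lambda>x. (\<alpha> * P x + \<beta> * Q x) / (\<alpha> + \<beta>))"

definition GJS :: "('a::finite \<Rightarrow> real) \<Rightarrow> ('a \<Rightarrow> real) \<Rightarrow> real \<Rightarrow> real \<Rightarrow> ereal" where
  "GJS P Q \<alpha> \<beta> = ereal \<alpha> * KL P (mixR \<alpha> \<beta> P Q) + ereal \<beta> * KL Q (mixR \<alpha> \<beta> P Q)"

text \<open>Matches: a K-match is a set of K index pairs in [M1] x [M2], no two sharing a coordinate.
  The enumeration M_t^h (h in [M2], t in [T_h]) is replaced by indexing with the match itself;
  h = card m.\<close>
definition is_match :: "nat \<Rightarrow> nat \<Rightarrow> (nat \<times> nat) set \<Rightarrow> bool" where
  "is_match M1 M2 m \<longleftrightarrow> m \<subseteq> {..<M1} \<times> {..<M2} \<and>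
     (\<forall>i j i' j'. (i, j) \<in> m \<longrightarrow> (i', j') \<in> m \<longrightarrow> (i = i' \<longleftrightarrow> j = j'))"

definition matches :: "nat \<Rightarrow> nat \<Rightarrow> (nat \<times> nat) set set" where
  "matches M1 M2 = {m. is_match M1 M2 m \<and> 1 \<le> card m \<and> card m \<le> M2}"

definition Gm :: "(nat \<times> nat) set \<Rightarrow> (nat \<Rightarrow> 'a::finite \<Rightarrow> real) \<Rightarrow> (nat \<Rightarrow> 'a \<Rightarrow> real)
                  \<Rightarrow> real \<Rightarrow> real \<Rightarrow> ereal" where
  "Gm m \<Omega> \<Psi> \<alpha> \<beta> = (\<Sum>(i, j)\<in>m. GJS (\<Omega> i) (\<Psi> j) \<alpha> \<beta>)"

definition Eexp :: "nat \<Rightarrow> nat \<Rightarrow> (nat \<Rightarrow> 'a::finite \<Rightarrow> real) \<Rightarrow> (nat \<Rightarrow> 'a \<Rightarrow> real)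
                    \<Rightarrow> (nat \<Rightarrow> 'a \<Rightarrow> real) \<Rightarrow> (nat \<Rightarrow> 'a \<Rightarrow> real) \<Rightarrow> real \<Rightarrow> real \<Rightarrow> ereal" where
  "Eexp M1 M2 P Q \<Omega> \<Psi> \<alpha> \<beta> =
     (\<Sum>i<M1. ereal \<alpha> * KL (\<Omega> i) (P i)) + (\<Sum>j<M2. ereal \<beta> * KL (\<Psi> j) (Q j))"

definition dists :: "nat \<Rightarrow> (nat \<Rightarrow> 'a::finite \<Rightarrow> real) \<Rightarrow> bool" where
  "dists M P \<longleftrightarrow> (\<forall>i<M. is_dist (P i))"

definition distinct_db :: "nat \<Rightarrow> (nat \<Rightarrow> 'a \<Rightarrow> real) \<Rightarrow> bool" where
  "distinct_db M P \<longleftrightarrow> (\<forall>i<M. \<forall>i'<M. i \<noteq> i' \<longrightarrow> P i \<noteq> P i')"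

definition hyp_class :: "nat \<Rightarrow> nat \<Rightarrow> (nat \<times> nat) set
                         \<Rightarrow> ((nat \<Rightarrow> 'a::finite \<Rightarrow> real) \<times> (nat \<Rightarrow> 'a \<Rightarrow> real)) set" where
  "hyp_class M1 M2 m = {(P, Q). dists M1 P \<and> dists M2 Q \<and> distinct_db M1 P \<and> distinct_db M2 Q \<and>
      (\<forall>i<M1. \<forall>j<M2. P i = Q j \<longleftrightarrow> (i, j) \<in> m)}"

definition null_class :: "nat \<Rightarrow> nat \<Rightarrow> ((nat \<Rightarrow> 'a::finite \<Rightarrow> real) \<times> (nat \<Rightarrow> 'a \<Rightarrow> real)) set" where
  "null_class M1 M2 = {(P, Q). dists M1 P \<and> dists M2 Q \<and> distinct_db M1 P \<and> distinct_db M2 Q \<and>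
      (\<forall>i<M1. \<forall>j<M2. P i \<noteq> Q j)}"

text \<open>Exponents (minimum over an empty set = +infinity, via Inf in ereal).\<close>
definition Er :: "real \<Rightarrow> nat \<Rightarrow> nat \<Rightarrow> (nat \<Rightarrow> 'a::finite \<Rightarrow> real) \<Rightarrow> (nat \<Rightarrow> 'a \<Rightarrow> real)
                  \<Rightarrow> real \<Rightarrow> real \<Rightarrow> ereal" where
  "Er lam M1 M2 P Q \<alpha> \<beta> = (INF (m, \<Omega>, \<Psi>) \<in> {(m, \<Omega>, \<Psi>). m \<in> matches M1 M2 \<and> dists M1 \<Omega> \<and> dists M2 \<Psi>
        \<and> Gm m \<Omega> \<Psi> \<alpha> \<beta> \<le> ereal lam}. Eexp M1 M2 P Q \<Omega> \<Psi> \<alpha> \<beta>)"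

definition Gexp :: "real \<Rightarrow> nat \<Rightarrow> nat \<Rightarrow> nat \<Rightarrow> (nat \<Rightarrow> 'a::finite \<Rightarrow> real) \<Rightarrow> (nat \<Rightarrow> 'a \<Rightarrow> real)
                  \<Rightarrow> real \<Rightarrow> real \<Rightarrow> ereal" where
  "Gexp lam M1 M2 K P Q \<alpha> \<beta> = (INF (m, \<Omega>, \<Psi>) \<in> {(m, \<Omega>, \<Psi>). m \<in> matches M1 M2 \<and> card m > K
        \<and> dists M1 \<Omega> \<and> dists M2 \<Psi> \<and> Gm m \<Omega> \<Psi> \<alpha> \<beta> \<le> ereal lam}. Eexp M1 M2 P Q \<Omega> \<Psi> \<alpha> \<beta>)"

definition Fexp :: "real \<Rightarrow> nat \<Rightarrow> nat \<Rightarrow> nat \<Rightarrow> (nat \<Rightarrow> 'a::finite \<Rightarrow> real) \<Rightarrow> (nat \<Rightarrow> 'a \<Rightarrow> real)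
                  \<Rightarrow> real \<Rightarrow> real \<Rightarrow> ereal" where
  "Fexp lam M1 M2 K P Q \<alpha> \<beta> = (INF (m1, m2, \<Omega>, \<Psi>) \<in> {(m1, m2, \<Omega>, \<Psi>).
        m1 \<in> matches M1 M2 \<and> m2 \<in> matches M1 M2 \<and> card m1 = K \<and> card m2 = K \<and> m1 \<noteq> m2
        \<and> dists M1 \<Omega> \<and> dists M2 \<Psi> \<and> Gm m1 \<Omega> \<Psi> \<alpha> \<beta> \<le> ereal lam \<and> Gm m2 \<Omega> \<Psi> \<alpha> \<beta> \<le> ereal lam}.
        Eexp M1 M2 P Q \<Omega> \<Psi> \<alpha> \<beta>)"

text \<open>Samples: x i k is the k-th sample of sequence i (i < M, k < n).\<close>
definition etype :: "nat \<Rightarrow> (nat \<Rightarrow> 'a) \<Rightarrow> 'a \<Rightarrow> real" where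
  "etype n xs a = real (card {k\<in>{..<n}. xs k = a}) / real n"

definition Sm :: "(nat \<times> nat) set \<Rightarrow> nat \<Rightarrow> nat \<Rightarrow> (nat \<Rightarrow> nat \<Rightarrow> 'a::finite) \<Rightarrow> (nat \<Rightarrow> nat \<Rightarrow> 'a)
                  \<Rightarrow> real \<Rightarrow> real \<Rightarrow> ereal" where
  "Sm m \<xi> \<chi> x y \<alpha> \<beta> = Gm m (\<lambda>i. etype \<xi> (x i)) (\<lambda>j. etype \<chi> (y j)) \<alpha> \<beta>"

definition B_event :: "nat \<Rightarrow> nat \<Rightarrow> nat \<Rightarrow> nat \<Rightarrow> real \<Rightarrow> real \<Rightarrow> real \<Rightarrow> real \<Rightarrow> (nat \<times> nat) set
                       \<Rightarrow> (nat \<Rightarrow> nat \<Rightarrow> 'a::finite) \<Rightarrow> (nat \<Rightarrow> nat \<Rightarrow> 'a) \<Rightarrow> bool" where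
  "B_event M1 M2 \<xi> \<chi> \<alpha> \<beta> lam1 lam2 m x y \<longleftrightarrow>
     Sm m \<xi> \<chi> x y \<alpha> \<beta> \<le> ereal lam1 \<and>
     (\<forall>m'\<in>matches M1 M2. card m' = card m \<and> m' \<noteq> m \<longrightarrow> Sm m' \<xi> \<chi> x y \<alpha> \<beta> > ereal lam2)"

definition accepts :: "nat \<Rightarrow> nat \<Rightarrow> nat \<Rightarrow> nat \<Rightarrow> real \<Rightarrow> real \<Rightarrow> real \<Rightarrow> real \<Rightarrow> (nat \<times> nat) set
                       \<Rightarrow> (nat \<Rightarrow> nat \<Rightarrow> 'a::finite) \<Rightarrow> (nat \<Rightarrow> nat \<Rightarrow> 'a) \<Rightarrow> bool" where
  "accepts M1 M2 \<xi> \<chi> \<alpha> \<beta> lam1 lam2 m x y \<longleftrightarrow> m \<in> matches M1 M2 \<and>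
     B_event M1 M2 \<xi> \<chi> \<alpha> \<beta> lam1 lam2 m x y \<and>
     (\<forall>m'\<in>matches M1 M2. m' \<noteq> m \<longrightarrow> \<not> B_event M1 M2 \<xi> \<chi> \<alpha> \<beta> lam1 lam2 m' x y)"

text \<open>Decision of the fixed-length test: Some m = H for match m, None = reject H_r.\<close>
definition fl_test :: "nat \<Rightarrow> nat \<Rightarrow> nat \<Rightarrow> nat \<Rightarrow> real \<Rightarrow> real \<Rightarrow> real \<Rightarrow> real
                       \<Rightarrow> (nat \<Rightarrow> nat \<Rightarrow> 'a::finite) \<Rightarrow> (nat \<Rightarrow> nat \<Rightarrow> 'a) \<Rightarrow> (nat \<times> nat) set option" where
  "fl_test M1 M2 \<xi> \<chi> \<alpha> \<beta> lam1 lam2 x y =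
     (if \<exists>m. accepts M1 M2 \<xi> \<chi> \<alpha> \<beta> lam1 lam2 m x y
      then Some (THE m. accepts M1 M2 \<xi> \<chi> \<alpha> \<beta> lam1 lam2 m x y) else None)"

definition samples :: "nat \<Rightarrow> nat \<Rightarrow> (nat \<Rightarrow> nat \<Rightarrow> 'a::finite) set" where
  "samples M n = PiE {..<M} (\<lambda>_. PiE {..<n} (\<lambda>_. UNIV))"

definition sample_prob :: "nat \<Rightarrow> nat \<Rightarrow> (nat \<Rightarrow> 'a::finite \<Rightarrow> real) \<Rightarrow> (nat \<Rightarrow> nat \<Rightarrow> 'a) \<Rightarrow> real" where
  "sample_prob M n P x = (\<Prod>i<M. \<Prod>k<n. P i (x i k))"

definition prob_event :: "nat \<Rightarrow> nat \<Rightarrow> nat \<Rightarrow> nat \<Rightarrow> (nat \<Rightarrow> 'a::finite \<Rightarrow> real) \<Rightarrow> (nat \<Rightarrow> 'a \<Rightarrow> real)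
                          \<Rightarrow> ((nat \<Rightarrow> nat \<Rightarrow> 'a) \<Rightarrow> (nat \<Rightarrow> nat \<Rightarrow> 'a) \<Rightarrow> bool) \<Rightarrow> real" where
  "prob_event M1 M2 \<xi> \<chi> P Q A =
     (\<Sum>(x, y)\<in>{(x, y). x \<in> samples M1 \<xi> \<and> y \<in> samples M2 \<chi> \<and> A x y}.
        sample_prob M1 \<xi> P x * sample_prob M2 \<chi> Q y)"

definition ssize :: "real \<Rightarrow> nat \<Rightarrow> nat" where
  "ssize \<alpha> N = nat \<lceil>\<alpha> * real N\<rceil>"

definition fl_eta where
  "fl_eta M1 M2 \<alpha> \<beta> lam1 lam2 P Q N = prob_event M1 M2 (ssize \<alpha> N) (ssize \<beta> N) P Q
     (\<lambda>x y. fl_test M1 M2 (ssize \<alpha> N) (ssize \<beta> N) \<alpha> \<beta> lam1 lam2 x y \<noteq> None)"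

definition fl_beta where
  "fl_beta M1 M2 \<alpha> \<beta> lam1 lam2 m0 P Q N = prob_event M1 M2 (ssize \<alpha> N) (ssize \<beta> N) P Q
     (\<lambda>x y. fl_test M1 M2 (ssize \<alpha> N) (ssize \<beta> N) \<alpha> \<beta> lam1 lam2 x y \<notin> {Some m0, None})"

definition fl_zeta where
  "fl_zeta M1 M2 \<alpha> \<beta> lam1 lam2 P Q N = prob_event M1 M2 (ssize \<alpha> N) (ssize \<beta> N) P Q
     (\<lambda>x y. fl_test M1 M2 (ssize \<alpha> N) (ssize \<beta> N) \<alpha> \<beta> lam1 lam2 x y = None)"

definition exprate :: "real \<Rightarrow> nat \<Rightarrow> ereal" where
  "exprate p N = (if p = 0 then \<infinity> else ereal (- ln p / real N))"

end

theory Submission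
  imports Defs
begin


definition cnt :: "nat \<Rightarrow> (nat \<Rightarrow> 'a) \<Rightarrow> 'a \<Rightarrow> nat" where
  "cnt n s a = card {k\<in>{..<n}. s k = a}"

lemma cnt_Suc: "cnt (Suc n) s a = cnt n s a + (if s n = a then 1 else 0)"
proof -
  have "{k\<in>{..<Suc n}. s k = a} = {k\<in>{..<n}. s k = a} \<union> (if s n = a then {n} else {})"
    by (auto simp: less_Suc_eq)
  then show ?thesis unfolding cnt_def by (auto simp: card_insert_if)
qed

lemma prod_cnt: "(\<Prod>k<n. f (s k)) = (\<Prod>a\<in>UNIV. f a ^ cnt n s a)" for f :: "'a::finite \<Rightarrow> real"
proof (induction n)
  case 0 then show ?case by (simp add: cnt_def)
next
  case (Suc n)
  have "(\<Prod>a\<in>UNIV. f a ^ cnt (Suc n) s a) = (\<Prod>a\<in>UNIV. f a ^ cnt n s a * (if s n = a then f a else 1))"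
    by (intro prod.cong) (auto simp: cnt_Suc)
  also have "\<dots> = (\<Prod>a\<in>UNIV. f a ^ cnt n s a) * f (s n)"
    by (simp add: prod.distrib prod.delta)
  finally show ?case using Suc by simp
qed

lemma sum_cnt: "(\<Sum>a\<in>(UNIV::'a::finite set). cnt n s a) = n"
proof (induction n)
  case 0 then show ?case by (simp add: cnt_def)
next
  case (Suc n)
  have "(\<Sum>a\<in>(UNIV::'a set). cnt (Suc n) s a) = (\<Sum>a\<in>UNIV. cnt n s a + (if s n = a then 1 else 0))"
    by (intro sum.cong) (auto simp: cnt_Suc)
  also have "\<dots> = n + 1" using Suc by (simp add: sum.distrib)
  finally show ?case by simp
qed

lemma etype_cnt: "etype n s a = real (cnt n s a) / real n"
  by (simp add: etype_def cnt_def)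

lemma etype_dist: "n > 0 \<Longrightarrow> is_dist (etype n s :: 'a::finite \<Rightarrow> real)"
proof -
  assume n: "n > 0"
  have "(\<Sum>a\<in>(UNIV::'a set). etype n s a) = (\<Sum>a\<in>UNIV. real (cnt n s a)) / real n"
    by (simp add: etype_cnt sum_divide_distrib)
  also have "\<dots> = 1" using n by (simp only: of_nat_sum[symmetric] sum_cnt) simp
  finally show ?thesis by (simp add: is_dist_def etype_def)
qed



definition KLr :: "('a::finite \<Rightarrow> real) \<Rightarrow> ('a \<Rightarrow> real) \<Rightarrow> real" where
  "KLr P Q = (\<Sum>x\<in>UNIV. if P x = 0 then 0 else P x * ln (P x / Q x))"

lemma KL_fin: "(\<And>x. P x \<noteq> 0 \<Longrightarrow> Q x \<noteq> 0) \<Longrightarrow> KL P Q = ereal (KLr P Q)"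
  unfolding KL_def KLr_def by (simp flip: sum_ereal) (intro sum.cong, auto)

lemma KL_inf: "P x \<noteq> 0 \<Longrightarrow> Q x = 0 \<Longrightarrow> KL P Q = \<infinity>"
  unfolding KL_def by (subst sum_Pinfty) (auto intro!: bexI[of _ x])

lemma gibbs:
  assumes "\<And>x. 0 \<le> T x" "\<And>x. 0 \<le> P x" "sum T UNIV = 1" "sum P UNIV \<le> 1"
    and "\<And>x. T x \<noteq> 0 \<Longrightarrow> P x \<noteq> 0"
  shows "0 \<le> KLr T P"
proof -
  have "T x - P x \<le> (if T x = 0 then 0 else T x * ln (T x / P x))" for x
  proof (cases "T x = 0")
    case True then show ?thesis using assms(2)[of x] by simp
  next
    case False
    then have t: "T x > 0" and p: "P x > 0" using assms(1,2,5)[of x] by (auto simp: order_le_less)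
    have "ln (P x / T x) \<le> P x / T x - 1" using t p by (intro ln_le_minus_one) auto
    moreover have "ln (T x / P x) = - ln (P x / T x)" using t p by (simp add: ln_div)
    ultimately have "1 - P x / T x \<le> ln (T x / P x)" by simp
    then have "T x * (1 - P x / T x) \<le> T x * ln (T x / P x)" using t by (intro mult_left_mono) auto
    then show ?thesis using False t by (simp add: algebra_simps)
  qed
  then have "(\<Sum>x\<in>UNIV. T x - P x) \<le> KLr T P" unfolding KLr_def by (intro sum_mono) auto
  then show ?thesis using assms(3,4) by (simp add: sum_subtractf)
qed

lemma KL_nonneg:
  assumes "is_dist T" "is_dist P"
  shows "0 \<le> KL T P"
proof (cases "\<exists>x. T x \<noteq> 0 \<and> P x = 0")
  case True then show ?thesis using KL_inf by fastforce
next
  case False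
  then have "KL T P = ereal (KLr T P)" by (intro KL_fin) auto
  moreover have "0 \<le> KLr T P" using assms False by (intro gibbs) (auto simp: is_dist_def)
  ultimately show ?thesis by simp
qed

lemma seq_zero:
  fixes P :: "'a::finite \<Rightarrow> real"
  assumes "n > 0" "etype n s a \<noteq> 0" "P a = 0"
  shows "(\<Prod>k<n. P (s k)) = 0"
proof -
  have "cnt n s a \<noteq> 0" using assms by (auto simp: etype_cnt)
  then have "{k\<in>{..<n}. s k = a} \<noteq> {}" unfolding cnt_def by (metis card.empty)
  then obtain k where "k < n" "s k = a" by auto
  then show ?thesis using assms(3) by (intro prod_zero) auto
qed

lemma seq_exact:
  fixes P :: "'a::finite \<Rightarrow> real"
  assumes "n > 0" "\<And>a. 0 \<le> P a" "\<And>a. etype n s a \<noteq> 0 \<Longrightarrow> P a \<noteq> 0"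
  shows "(\<Prod>k<n. P (s k)) = (\<Prod>k<n. etype n s (s k)) * exp (- real n * KLr (etype n s) P)"
proof -
  let ?T = "etype n s"
  have eq: "P a ^ cnt n s a = ?T a ^ cnt n s a *
     exp (- real n * (if ?T a = 0 then 0 else ?T a * ln (?T a / P a)))" for a
  proof (cases "cnt n s a = 0")
    case True then show ?thesis by (simp add: etype_cnt)
  next
    case False
    then have t: "?T a > 0" using assms(1) by (simp add: etype_cnt)
    then have p: "P a > 0" using assms(2,3)[of a] by (auto simp: order_le_less)
    have l: "ln (?T a / P a) = - ln (P a / ?T a)" using t p by (simp add: ln_div)
    have c: "real n * ?T a = real (cnt n s a)" using assms(1) by (simp add: etype_cnt)
    have "- real n * (?T a * ln (?T a / P a)) = - (real n * ?T a) * ln (?T a / P a)" by simp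
    also have "\<dots> = real (cnt n s a) * ln (P a / ?T a)" by (simp only: l c)
    finally have "- real n * (?T a * ln (?T a / P a)) = real (cnt n s a) * ln (P a / ?T a)" .
    then have "exp (- real n * (?T a * ln (?T a / P a))) = (P a / ?T a) ^ cnt n s a"
      using t p by (simp add: ln_realpow[symmetric])
    then show ?thesis using t by (simp add: power_divide)
  qed
  have "(\<Prod>k<n. P (s k)) = (\<Prod>a\<in>UNIV. P a ^ cnt n s a)" by (rule prod_cnt)
  also have "\<dots> = (\<Prod>a\<in>UNIV. ?T a ^ cnt n s a) *
     (\<Prod>a\<in>UNIV. exp (- real n * (if ?T a = 0 then 0 else ?T a * ln (?T a / P a))))"
    by (simp add: eq prod.distrib)
  also have "(\<Prod>a\<in>UNIV. exp (- real n * (if ?T a = 0 then 0 else ?T a * ln (?T a / P a))))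
      = exp (- real n * KLr ?T P)"
    by (simp add: KLr_def exp_sum sum_distrib_left)
  finally show ?thesis by (simp add: prod_cnt)
qed



lemma types_sum:
  assumes n: "n > 0"
  shows "(\<Sum>s\<in>PiE {..<n} (\<lambda>_. UNIV::'a::finite set). \<Prod>k<n. etype n s (s k)) \<le> real ((n+1)^card (UNIV::'a set))"
proof -
  let ?S = "PiE {..<n} (\<lambda>_. UNIV::'a set)"
  let ?V = "PiE (UNIV::'a set) (\<lambda>_. {..n})"
  let ?f = "\<lambda>s. \<Prod>k<n. etype n s (s k)"
  have fS: "finite ?S" by (intro finite_PiE) auto
  have fV: "finite ?V" by (intro finite_PiE) auto
  have img: "cnt n ` ?S \<subseteq> ?V"
  proof
    fix c assume "c \<in> cnt n ` ?S"
    then obtain s where c: "c = cnt n s" by auto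
    have "cnt n s a \<le> n" for a
    proof -
      have "cnt n s a \<le> card {..<n}" unfolding cnt_def by (intro card_mono) auto
      then show ?thesis by simp
    qed
    then show "c \<in> ?V" using c by (auto simp: PiE_iff)
  qed
  have fib: "(\<Sum>s\<in>{s. s \<in> ?S \<and> cnt n s = c}. ?f s) \<le> 1" for c
  proof (cases "{s. s \<in> ?S \<and> cnt n s = c} = {}")
    case True then show ?thesis by (simp only: sum.empty)
  next
    case False
    then obtain s0 where s0: "cnt n s0 = c" by auto
    let ?g = "\<lambda>s. \<Prod>k<n. real (c (s k)) / real n"
    have "(\<Sum>s\<in>{s. s \<in> ?S \<and> cnt n s = c}. ?f s) = (\<Sum>s\<in>{s. s \<in> ?S \<and> cnt n s = c}. ?g s)"
      by (intro sum.cong refl prod.cong) (auto simp: etype_cnt)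
    also have "\<dots> \<le> (\<Sum>s\<in>?S. ?g s)"
      by (rule sum_mono2[OF fS]) (blast, intro prod_nonneg, simp)
    also have "\<dots> = (\<Prod>k<n. \<Sum>a\<in>UNIV. real (c a) / real n)"
      by (rule prod_sum_PiE[symmetric]) auto
    also have "(\<Sum>a\<in>UNIV. real (c a) / real n) = 1"
      using n s0 sum_cnt[of n s0] by (simp add: sum_divide_distrib[symmetric] flip: of_nat_sum)
    finally show ?thesis by simp
  qed
  have "(\<Sum>s\<in>?S. ?f s) = (\<Sum>c\<in>?V. \<Sum>s\<in>{s. s \<in> ?S \<and> cnt n s = c}. ?f s)"
    by (rule sum.group[OF fS fV img, symmetric])
  also have "\<dots> \<le> (\<Sum>c\<in>?V. 1)" by (intro sum_mono fib)
  also have "\<dots> = real ((n+1)^card (UNIV::'a set))" by (simp add: card_PiE)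
  finally show ?thesis .
qed

lemma samples_sum:
  "(\<Sum>x\<in>samples M n. \<Prod>i<M. g (x i)) = (\<Prod>i<M. \<Sum>s\<in>PiE {..<n} (\<lambda>_. UNIV::'a::finite set). (g s::real))"
  unfolding samples_def by (subst prod_sum_PiE) (auto intro!: finite_PiE)



definition Cst :: "real \<Rightarrow> real \<Rightarrow> nat \<Rightarrow> nat \<Rightarrow> nat \<Rightarrow> nat \<Rightarrow> real" where
  "Cst \<alpha> \<beta> c M1 M2 N = real ((ssize \<alpha> N + 1)^c)^M1 * real ((ssize \<beta> N + 1)^c)^M2"

lemma ssize_pos: "0 < \<alpha> \<Longrightarrow> 0 < N \<Longrightarrow> 0 < ssize \<alpha> N"
  unfolding ssize_def by simp

lemma ssize_ge: "\<alpha> * real N \<le> real (ssize \<alpha> N)"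
  unfolding ssize_def by (rule real_nat_ceiling_ge)

definition Wt :: "nat \<Rightarrow> nat \<Rightarrow> (nat \<Rightarrow> nat \<Rightarrow> 'a) \<Rightarrow> real" where
  "Wt M n x = (\<Prod>i<M. \<Prod>k<n. etype n (x i) (x i k))"

lemma Wt_nonneg: "0 \<le> Wt M n x"
  unfolding Wt_def etype_def by (intro prod_nonneg) auto

lemma Wt_sum:
  assumes "n > 0"
  shows "(\<Sum>x\<in>samples M n. Wt M n (x::nat \<Rightarrow> nat \<Rightarrow> 'a::finite)) \<le> real ((n+1)^card (UNIV::'a set))^M"
proof -
  have "(\<Sum>x\<in>samples M n. Wt M n (x::nat \<Rightarrow> nat \<Rightarrow> 'a::finite)) =
     (\<Prod>i<M. \<Sum>s\<in>PiE {..<n} (\<lambda>_. UNIV::'a set). \<Prod>k<n. etype n s (s k))"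
    unfolding Wt_def by (rule samples_sum)
  also have "\<dots> \<le> (\<Prod>i<M. real ((n+1)^card (UNIV::'a set)))"
    by (intro prod_mono conjI types_sum assms sum_nonneg prod_nonneg) (auto simp: etype_def)
  finally show ?thesis by simp
qed

lemma KLr_nonneg_type:
  assumes "n > 0" "is_dist P" "\<And>a. etype n s a \<noteq> 0 \<Longrightarrow> P a \<noteq> 0"
  shows "0 \<le> KLr (etype n s) P"
  using etype_dist[OF assms(1), of s] assms(2,3) by (intro gibbs) (auto simp: is_dist_def)

lemma sp_exact:
  assumes "n > 0" "dists M P" "\<And>i a. i < M \<Longrightarrow> etype n (x i) a \<noteq> 0 \<Longrightarrow> P i a \<noteq> 0"
  shows "sample_prob M n P x = Wt M n x * exp (- real n * (\<Sum>i<M. KLr (etype n (x i)) (P i)))"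
proof -
  have "sample_prob M n P x = (\<Prod>i<M. (\<Prod>k<n. etype n (x i) (x i k)) * exp (- real n * KLr (etype n (x i)) (P i)))"
    unfolding sample_prob_def
    using assms by (intro prod.cong refl seq_exact) (auto simp: dists_def is_dist_def)
  also have "\<dots> = Wt M n x * exp (- real n * (\<Sum>i<M. KLr (etype n (x i)) (P i)))"
    by (simp add: Wt_def prod.distrib exp_sum sum_distrib_left)
  finally show ?thesis .
qed

lemma sp_zero:
  assumes "n > 0" "i < M" "etype n (x i) a \<noteq> 0" "P i a = 0"
  shows "sample_prob M n P x = 0"
  unfolding sample_prob_def using assms seq_zero[of n "x i" a "P i"]
  by (intro prod_zero) auto

lemma sp_nonneg: "dists M P \<Longrightarrow> 0 \<le> sample_prob M n P x"
  unfolding sample_prob_def dists_def is_dist_def by (intro prod_nonneg) auto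

lemma Eexp_fin:
  assumes "\<And>i a. i < M1 \<Longrightarrow> \<Omega> i a \<noteq> 0 \<Longrightarrow> P i a \<noteq> 0"
    "\<And>j a. j < M2 \<Longrightarrow> \<Psi> j a \<noteq> 0 \<Longrightarrow> Q j a \<noteq> 0"
  shows "Eexp M1 M2 P Q \<Omega> \<Psi> \<alpha> \<beta> =
    ereal (\<alpha> * (\<Sum>i<M1. KLr (\<Omega> i) (P i)) + \<beta> * (\<Sum>j<M2. KLr (\<Psi> j) (Q j)))"
  unfolding Eexp_def using assms
  by (simp add: KL_fin sum_distrib_left)

lemma pointwise_bound:
  fixes P Q :: "nat \<Rightarrow> 'a::finite \<Rightarrow> real"
  assumes N: "N > 0" and ab: "0 < \<alpha>" "0 < \<beta>" and PQ: "dists M1 P" "dists M2 Q" and e: "0 \<le> e"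
    and E: "ereal e \<le> Eexp M1 M2 P Q (\<lambda>i. etype (ssize \<alpha> N) (x i)) (\<lambda>j. etype (ssize \<beta> N) (y j)) \<alpha> \<beta>"
  shows "sample_prob M1 (ssize \<alpha> N) P x * sample_prob M2 (ssize \<beta> N) Q y
         \<le> Wt M1 (ssize \<alpha> N) x * Wt M2 (ssize \<beta> N) y * exp (- real N * e)"
proof -
  define n1 where "n1 = ssize \<alpha> N"
  define n2 where "n2 = ssize \<beta> N"
  have n1: "n1 > 0" and n2: "n2 > 0" using N ab by (auto simp: n1_def n2_def ssize_pos)
  have rhs: "0 \<le> Wt M1 n1 x * Wt M2 n2 y * exp (- real N * e)"
    by (intro mult_nonneg_nonneg Wt_nonneg) auto
  show ?thesis
  proof (cases "\<exists>i a. i < M1 \<and> etype n1 (x i) a \<noteq> 0 \<and> P i a = 0")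
    case True
    then obtain i a where "i < M1" "etype n1 (x i) a \<noteq> 0" "P i a = 0" by auto
    then have "sample_prob M1 n1 P x = 0" using n1 by (intro sp_zero)
    then show ?thesis using rhs by (simp add: n1_def n2_def)
  next
    case F1: False
    show ?thesis
    proof (cases "\<exists>j a. j < M2 \<and> etype n2 (y j) a \<noteq> 0 \<and> Q j a = 0")
      case True
      then obtain j a where "j < M2" "etype n2 (y j) a \<noteq> 0" "Q j a = 0" by auto
      then have "sample_prob M2 n2 Q y = 0" using n2 by (intro sp_zero)
      then show ?thesis using rhs by (simp add: n1_def n2_def)
    next
      case F2: False
      define S1 where "S1 = (\<Sum>i<M1. KLr (etype n1 (x i)) (P i))"
      define S2 where "S2 = (\<Sum>j<M2. KLr (etype n2 (y j)) (Q j))"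
      have S1: "0 \<le> S1" unfolding S1_def using F1 PQ(1) n1
        by (intro sum_nonneg KLr_nonneg_type) (auto simp: dists_def)
      have S2: "0 \<le> S2" unfolding S2_def using F2 PQ(2) n2
        by (intro sum_nonneg KLr_nonneg_type) (auto simp: dists_def)
      have "ereal e \<le> ereal (\<alpha> * S1 + \<beta> * S2)"
        using E F1 F2 unfolding S1_def S2_def n1_def n2_def
        by (subst (asm) Eexp_fin) auto
      then have e1: "e \<le> \<alpha> * S1 + \<beta> * S2" by simp
      have "real N * e \<le> (\<alpha> * real N) * S1 + (\<beta> * real N) * S2"
        using e1 mult_left_mono[OF e1, of "real N"] by (simp add: algebra_simps)
      also have "\<dots> \<le> real n1 * S1 + real n2 * S2"
        using S1 S2 ssize_ge[of \<alpha> N] ssize_ge[of \<beta> N] unfolding n1_def n2_def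
        by (intro add_mono mult_right_mono) auto
      finally have ex: "exp (- real n1 * S1) * exp (- real n2 * S2) \<le> exp (- real N * e)"
        by (simp flip: exp_add)
      have h1: "sample_prob M1 n1 P x = Wt M1 n1 x * exp (- real n1 * S1)"
        unfolding S1_def using F1 by (intro sp_exact[OF n1 PQ(1)]) auto
      have h2: "sample_prob M2 n2 Q y = Wt M2 n2 y * exp (- real n2 * S2)"
        unfolding S2_def using F2 by (intro sp_exact[OF n2 PQ(2)]) auto
      have "sample_prob M1 n1 P x * sample_prob M2 n2 Q y =
          Wt M1 n1 x * Wt M2 n2 y * (exp (- real n1 * S1) * exp (- real n2 * S2))"
        unfolding h1 h2 by (simp add: mult_ac)
      also have "\<dots> \<le> Wt M1 n1 x * Wt M2 n2 y * exp (- real N * e)"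
        using ex by (intro mult_left_mono mult_nonneg_nonneg Wt_nonneg)
      finally show ?thesis by (simp add: n1_def n2_def)
    qed
  qed
qed

lemma ld_bound:
  fixes P Q :: "nat \<Rightarrow> 'a::finite \<Rightarrow> real"
  assumes N: "N > 0" and ab: "0 < \<alpha>" "0 < \<beta>" and PQ: "dists M1 P" "dists M2 Q" and e: "0 \<le> e"
    and E: "\<And>x y. x \<in> samples M1 (ssize \<alpha> N) \<Longrightarrow> y \<in> samples M2 (ssize \<beta> N) \<Longrightarrow> A x y \<Longrightarrow>
       ereal e \<le> Eexp M1 M2 P Q (\<lambda>i. etype (ssize \<alpha> N) (x i)) (\<lambda>j. etype (ssize \<beta> N) (y j)) \<alpha> \<beta>"
  shows "prob_event M1 M2 (ssize \<alpha> N) (ssize \<beta> N) P Q A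
     \<le> Cst \<alpha> \<beta> (card (UNIV::'a set)) M1 M2 N * exp (- real N * e)"
proof -
  define n1 where "n1 = ssize \<alpha> N"
  define n2 where "n2 = ssize \<beta> N"
  have n1: "n1 > 0" and n2: "n2 > 0" using N ab by (auto simp: n1_def n2_def ssize_pos)
  let ?S1 = "samples M1 n1 :: (nat \<Rightarrow> nat \<Rightarrow> 'a) set"
  let ?S2 = "samples M2 n2 :: (nat \<Rightarrow> nat \<Rightarrow> 'a) set"
  have f1: "finite ?S1" and f2: "finite ?S2" unfolding samples_def by (auto intro!: finite_PiE)
  let ?W = "\<lambda>(x, y). Wt M1 n1 x * Wt M2 n2 y * exp (- real N * e)"
  have "prob_event M1 M2 n1 n2 P Q A \<le> (\<Sum>(x, y)\<in>{(x, y). x \<in> ?S1 \<and> y \<in> ?S2 \<and> A x y}. ?W (x, y))"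
    unfolding prob_event_def
  proof (intro sum_mono, clarify)
    fix x y assume xy: "x \<in> ?S1" "y \<in> ?S2" "A x y"
    show "sample_prob M1 n1 P x * sample_prob M2 n2 Q y \<le> Wt M1 n1 x * Wt M2 n2 y * exp (- real N * e)"
      using pointwise_bound[OF N ab PQ e E[OF xy[unfolded n1_def n2_def]]] by (simp add: n1_def n2_def)
  qed
  also have "\<dots> \<le> (\<Sum>(x, y)\<in>?S1 \<times> ?S2. ?W (x, y))"
    using f1 f2 by (intro sum_mono2) (auto intro!: mult_nonneg_nonneg Wt_nonneg)
  also have "\<dots> = (\<Sum>x\<in>?S1. Wt M1 n1 x) * (\<Sum>y\<in>?S2. Wt M2 n2 y) * exp (- real N * e)"
    by (simp add: sum.cartesian_product[symmetric] sum_distrib_left sum_distrib_right mult.assoc mult.left_commute) (rule sum.swap)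
  also have "\<dots> \<le> real ((n1+1)^card (UNIV::'a set))^M1 * real ((n2+1)^card (UNIV::'a set))^M2 * exp (- real N * e)"
    by (intro mult_right_mono mult_mono Wt_sum n1 n2 sum_nonneg Wt_nonneg) auto
  finally show ?thesis by (simp add: Cst_def n1_def n2_def)
qed



definition tt :: "real \<Rightarrow> real \<Rightarrow> real" where
  "tt u v = (if u = 0 then 0 else u * ln (u / v))"

lemma KLr_tt: "KLr P Q = (\<Sum>x\<in>UNIV. tt (P x) (Q x))"
  unfolding KLr_def tt_def ..

lemma tt_shift:
  assumes "0 \<le> u" "0 < r" "0 < p"
  shows "tt u p = tt u r + u * ln (r / p)"
proof (cases "u = 0")
  case True then show ?thesis by (simp add: tt_def)
next
  case False
  then have u: "u > 0" using assms by simp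
  then show ?thesis using assms unfolding tt_def by (simp add: ln_div algebra_simps)
qed

lemma mix_dist:
  assumes "is_dist \<Omega>" "is_dist \<Psi>" "0 < \<alpha>" "0 < \<beta>"
  shows "is_dist (mixR \<alpha> \<beta> \<Omega> \<Psi>)"
proof -
  have "(\<Sum>x\<in>UNIV. (\<alpha> * \<Omega> x + \<beta> * \<Psi> x) / (\<alpha> + \<beta>)) = (\<alpha> * sum \<Omega> UNIV + \<beta> * sum \<Psi> UNIV) / (\<alpha> + \<beta>)"
    by (simp add: sum_divide_distrib[symmetric] sum.distrib sum_distrib_left)
  also have "\<dots> = 1" using assms by (simp add: is_dist_def)
  finally show ?thesis using assms unfolding is_dist_def mixR_def
    by (auto intro!: divide_nonneg_pos add_nonneg_nonneg mult_nonneg_nonneg)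
qed

lemma GJS_le:
  fixes \<Omega> \<Psi> P :: "'a::finite \<Rightarrow> real"
  assumes d: "is_dist \<Omega>" "is_dist \<Psi>" "is_dist P" and ab: "0 < \<alpha>" "0 < \<beta>"
  shows "GJS \<Omega> \<Psi> \<alpha> \<beta> \<le> ereal \<alpha> * KL \<Omega> P + ereal \<beta> * KL \<Psi> P"
proof (cases "\<exists>x. P x = 0 \<and> (\<Omega> x \<noteq> 0 \<or> \<Psi> x \<noteq> 0)")
  case True
  then obtain x where x: "P x = 0" "\<Omega> x \<noteq> 0 \<or> \<Psi> x \<noteq> 0" by auto
  have n1: "0 \<le> KL \<Omega> P" and n2: "0 \<le> KL \<Psi> P" using d by (auto intro: KL_nonneg)
  have inf: "ereal \<alpha> * KL \<Omega> P + ereal \<beta> * KL \<Psi> P = \<infinity>"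
  proof (cases "\<Omega> x \<noteq> 0")
    case True
    then have "KL \<Omega> P = \<infinity>" using x by (intro KL_inf)
    then show ?thesis using ab n2 by (cases "KL \<Psi> P") auto
  next
    case False
    then have "KL \<Psi> P = \<infinity>" using x by (intro KL_inf) auto
    then show ?thesis using ab n1 by (cases "KL \<Omega> P") auto
  qed
  show ?thesis unfolding inf by simp
next
  case False
  define R where "R = mixR \<alpha> \<beta> \<Omega> \<Psi>"
  have nn: "0 \<le> \<Omega> x" "0 \<le> \<Psi> x" "0 \<le> P x" for x using d by (auto simp: is_dist_def)
  have R0: "R x = 0 \<longleftrightarrow> \<Omega> x = 0 \<and> \<Psi> x = 0" for x
  proof -
    have "R x = 0 \<longleftrightarrow> \<alpha> * \<Omega> x + \<beta> * \<Psi> x = 0" using ab by (simp add: R_def mixR_def)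
    also have "\<dots> \<longleftrightarrow> \<Omega> x = 0 \<and> \<Psi> x = 0"
    proof -
      have "0 \<le> \<alpha> * \<Omega> x" "0 \<le> \<beta> * \<Psi> x" using ab nn[of x] by simp_all
      then show ?thesis using ab by (simp add: add_nonneg_eq_0_iff)
    qed
    finally show ?thesis .
  qed
  have Rd: "is_dist R" unfolding R_def using d ab by (intro mix_dist)
  have k1: "KL \<Omega> P = ereal (KLr \<Omega> P)" "KL \<Psi> P = ereal (KLr \<Psi> P)"
    using False by (auto intro!: KL_fin)
  have k2: "KL \<Omega> R = ereal (KLr \<Omega> R)" "KL \<Psi> R = ereal (KLr \<Psi> R)"
    using R0 by (auto intro!: KL_fin)
  have pt: "\<alpha> * tt (\<Omega> x) (P x) + \<beta> * tt (\<Psi> x) (P x) =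
      \<alpha> * tt (\<Omega> x) (R x) + \<beta> * tt (\<Psi> x) (R x) + (\<alpha> + \<beta>) * tt (R x) (P x)" for x
  proof (cases "R x = 0")
    case True then show ?thesis using R0 by (simp add: tt_def)
  next
    case Rn: False
    have "0 \<le> R x" using Rd by (simp add: is_dist_def)
    then have r: "R x > 0" using Rn by simp
    have p: "P x > 0" using False Rn R0 nn[of x] by (auto simp: order_le_less)
    have "(\<alpha> + \<beta>) * R x = \<alpha> * \<Omega> x + \<beta> * \<Psi> x" using ab by (simp add: R_def mixR_def)
    then have eq3: "(\<alpha> + \<beta>) * tt (R x) (P x) = (\<alpha> * \<Omega> x + \<beta> * \<Psi> x) * ln (R x / P x)"
      using Rn by (simp add: tt_def)
    show ?thesis unfolding eq3 tt_shift[OF nn(1) r p] tt_shift[OF nn(2) r p]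
      by (simp add: distrib_left distrib_right)
  qed
  have "\<alpha> * KLr \<Omega> P + \<beta> * KLr \<Psi> P = \<alpha> * KLr \<Omega> R + \<beta> * KLr \<Psi> R + (\<alpha> + \<beta>) * KLr R P"
  proof -
    have "\<alpha> * KLr \<Omega> P + \<beta> * KLr \<Psi> P = (\<Sum>x\<in>UNIV. \<alpha> * tt (\<Omega> x) (P x) + \<beta> * tt (\<Psi> x) (P x))"
      by (simp add: KLr_tt sum_distrib_left sum.distrib)
    also have "\<dots> = (\<Sum>x\<in>UNIV. \<alpha> * tt (\<Omega> x) (R x) + \<beta> * tt (\<Psi> x) (R x) + (\<alpha> + \<beta>) * tt (R x) (P x))"
      by (simp only: pt)
    also have "\<dots> = \<alpha> * KLr \<Omega> R + \<beta> * KLr \<Psi> R + (\<alpha> + \<beta>) * KLr R P"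
      by (simp add: KLr_tt sum_distrib_left sum.distrib)
    finally show ?thesis .
  qed
  moreover have "0 \<le> KLr R P" using Rd d(3) R0 False by (intro gibbs) (auto simp: is_dist_def)
  ultimately have "\<alpha> * KLr \<Omega> R + \<beta> * KLr \<Psi> R \<le> \<alpha> * KLr \<Omega> P + \<beta> * KLr \<Psi> P"
    using ab by simp
  then show ?thesis unfolding GJS_def R_def[symmetric] k1 k2 by simp
qed



lemma ereal_mult_nn: "0 \<le> (a::ereal) \<Longrightarrow> 0 \<le> b \<Longrightarrow> 0 \<le> a * b"
  by (cases a; cases b) auto

lemma Eexp_ge_Gm:
  fixes P Q \<Omega> \<Psi> :: "nat \<Rightarrow> 'a::finite \<Rightarrow> real"
  assumes d: "dists M1 P" "dists M2 Q" "dists M1 \<Omega>" "dists M2 \<Psi>" and m: "is_match M1 M2 m"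
    and eq: "\<And>i j. (i, j) \<in> m \<Longrightarrow> P i = Q j" and ab: "0 < \<alpha>" "0 < \<beta>"
  shows "Gm m \<Omega> \<Psi> \<alpha> \<beta> \<le> Eexp M1 M2 P Q \<Omega> \<Psi> \<alpha> \<beta>"
proof -
  have sub: "m \<subseteq> {..<M1} \<times> {..<M2}" using m by (simp add: is_match_def)
  then have fin: "finite m" by (rule finite_subset) auto
  have injf: "inj_on fst m" using m unfolding is_match_def inj_on_def by fastforce
  have injs: "inj_on snd m" using m unfolding is_match_def inj_on_def by fastforce
  have nn1: "0 \<le> ereal \<alpha> * KL (\<Omega> i) (P i)" if "i < M1" for i
    using d that ab by (intro ereal_mult_nn KL_nonneg) (auto simp: dists_def)
  have nn2: "0 \<le> ereal \<beta> * KL (\<Psi> j) (Q j)" if "j < M2" for j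
    using d that ab by (intro ereal_mult_nn KL_nonneg) (auto simp: dists_def)
  have "Gm m \<Omega> \<Psi> \<alpha> \<beta> \<le> (\<Sum>p\<in>m. ereal \<alpha> * KL (\<Omega> (fst p)) (P (fst p)) + ereal \<beta> * KL (\<Psi> (snd p)) (Q (snd p)))"
    unfolding Gm_def
  proof (intro sum_mono, clarify)
    fix i j assume ij: "(i, j) \<in> m"
    then have "i < M1" "j < M2" using sub by auto
    then show "GJS (\<Omega> i) (\<Psi> j) \<alpha> \<beta> \<le> ereal \<alpha> * KL (\<Omega> (fst (i, j))) (P (fst (i, j))) + ereal \<beta> * KL (\<Psi> (snd (i, j))) (Q (snd (i, j)))"
      using GJS_le[of "\<Omega> i" "\<Psi> j" "P i" \<alpha> \<beta>] d ab eq[OF ij] by (auto simp: dists_def)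
  qed
  also have "\<dots> = (\<Sum>p\<in>m. ereal \<alpha> * KL (\<Omega> (fst p)) (P (fst p))) + (\<Sum>p\<in>m. ereal \<beta> * KL (\<Psi> (snd p)) (Q (snd p)))"
    by (rule sum.distrib)
  also have "(\<Sum>p\<in>m. ereal \<alpha> * KL (\<Omega> (fst p)) (P (fst p))) = (\<Sum>i\<in>fst ` m. ereal \<alpha> * KL (\<Omega> i) (P i))"
    by (simp add: sum.reindex[OF injf])
  also have "(\<Sum>p\<in>m. ereal \<beta> * KL (\<Psi> (snd p)) (Q (snd p))) = (\<Sum>j\<in>snd ` m. ereal \<beta> * KL (\<Psi> j) (Q j))"
    by (simp add: sum.reindex[OF injs])
  also have "(\<Sum>i\<in>fst ` m. ereal \<alpha> * KL (\<Omega> i) (P i)) \<le> (\<Sum>i<M1. ereal \<alpha> * KL (\<Omega> i) (P i))"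
    using sub nn1 by (intro sum_mono2) auto
  also have "(\<Sum>j\<in>snd ` m. ereal \<beta> * KL (\<Psi> j) (Q j)) \<le> (\<Sum>j<M2. ereal \<beta> * KL (\<Psi> j) (Q j))"
    using sub nn2 by (intro sum_mono2) auto
  finally show ?thesis unfolding Eexp_def by (simp add: add_mono)
qed

lemma liminf_from_bound:
  fixes p C :: "nat \<Rightarrow> real" and X :: ereal
  assumes X: "0 \<le> X" and lim: "(\<lambda>N. ln (C N) / real N) \<longlonglongrightarrow> 0" and Cp: "\<And>N. N > 0 \<Longrightarrow> C N > 0"
    and p0: "\<And>N. 0 \<le> p N"
    and bnd: "\<And>N e. N > 0 \<Longrightarrow> 0 \<le> e \<Longrightarrow> ereal e \<le> X \<Longrightarrow> p N \<le> C N * exp (- real N * e)"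
  shows "X \<le> liminf (\<lambda>N. exprate (p N) N)"
  unfolding le_Liminf_iff
proof (intro allI impI)
  fix y assume yX: "y < X"
  obtain z where z: "y < ereal z" "ereal z < X" using ereal_dense2[OF yX] by auto
  define e where "e = max z 0"
  have eX: "ereal e \<le> X"
  proof (cases "z \<le> 0")
    case True then show ?thesis using X by (simp add: e_def zero_ereal_def)
  next
    case False then show ?thesis using z by (simp add: e_def)
  qed
  have ye: "y < ereal e" using z by (auto simp: e_def max_def) (metis ereal_less_eq(3) less_le_trans)
  have e0: "0 \<le> e" by (simp add: e_def)
  show "\<forall>\<^sub>F N in sequentially. y < exprate (p N) N"
  proof (cases y)
    case MInf
    then show ?thesis by (simp add: exprate_def)
  next
    case PInf then show ?thesis using yX by simp
  next
    case (real r)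
    then have re: "r < e" using ye by simp
    have ev1: "\<forall>\<^sub>F N in sequentially. ln (C N) / real N < e - r"
      using order_tendstoD(2)[OF lim, of "e - r"] re by simp
    have ev2: "\<forall>\<^sub>F N in sequentially. N > 0" by (rule eventually_gt_at_top)
    show ?thesis using ev1 ev2
    proof eventually_elim
      case (elim N)
      show ?case
      proof (cases "p N = 0")
        case True then show ?thesis by (simp add: exprate_def real)
      next
        case False
        then have pp: "p N > 0" using p0[of N] by simp
        have CN: "C N > 0" using Cp elim(2) by simp
        have "ln (p N) \<le> ln (C N * exp (- real N * e))"
          using bnd[OF elim(2) e0 eX] pp by simp
        also have "\<dots> = ln (C N) - real N * e" using CN by (simp add: ln_mult)
        finally have "ln (p N) \<le> ln (C N) - real N * e" .
        then have "- ln (p N) / real N \<ge> (real N * e - ln (C N)) / real N"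
          using elim(2) by (intro divide_right_mono) auto
        also have "(real N * e - ln (C N)) / real N = e - ln (C N) / real N"
          using elim(2) by (simp add: field_simps)
        finally have "r < - ln (p N) / real N" using elim(1) by simp
        then show ?thesis using False by (simp add: exprate_def real)
      qed
    qed
  qed
qed

lemma ln_ssize_lim:
  assumes a: "0 < \<alpha>"
  shows "(\<lambda>N. ln (real (ssize \<alpha> N + 1)) / real N) \<longlonglongrightarrow> 0"
proof (rule tendsto_sandwich[of "\<lambda>_. 0" _ _ "\<lambda>N. ln (\<alpha> + 2) / real N + ln (real N) / real N"])
  show "\<forall>\<^sub>F N in sequentially. 0 \<le> ln (real (ssize \<alpha> N + 1)) / real N" by simp
  show "\<forall>\<^sub>F N in sequentially. ln (real (ssize \<alpha> N + 1)) / real N \<le> ln (\<alpha> + 2) / real N + ln (real N) / real N"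
    using eventually_gt_at_top[of "0::nat"]
  proof eventually_elim
    case (elim N)
    have "real (ssize \<alpha> N) \<le> \<alpha> * real N + 1" unfolding ssize_def using a
      by (simp add: of_nat_nat)
    then have "real (ssize \<alpha> N + 1) \<le> (\<alpha> + 2) * real N" using elim by (simp add: algebra_simps)
    then have "ln (real (ssize \<alpha> N + 1)) \<le> ln ((\<alpha> + 2) * real N)" by simp
    also have "\<dots> = ln (\<alpha> + 2) + ln (real N)" using a elim by (simp add: ln_mult)
    finally show ?case using elim by (simp add: add_divide_distrib[symmetric] divide_right_mono)
  qed
  have "(\<lambda>N. ln (real N) / real N) \<longlonglongrightarrow> 0"
    using filterlim_compose[OF ln_x_over_x_tendsto_0 filterlim_real_sequentially] by (simp add: o_def)
  then show "(\<lambda>N. ln (\<alpha> + 2) / real N + ln (real N) / real N) \<longlonglongrightarrow> 0"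
    using tendsto_add[OF lim_const_over_n[of "ln (\<alpha> + 2)"]] by simp
qed (rule tendsto_const)

lemma Cst_lim:
  assumes "0 < \<alpha>" "0 < \<beta>"
  shows "(\<lambda>N. ln (Cst \<alpha> \<beta> c M1 M2 N) / real N) \<longlonglongrightarrow> 0"
proof -
  have eq: "ln (Cst \<alpha> \<beta> c M1 M2 N) / real N =
     real (M1 * c) * (ln (real (ssize \<alpha> N + 1)) / real N) + real (M2 * c) * (ln (real (ssize \<beta> N + 1)) / real N)" for N
    unfolding Cst_def by (simp add: ln_mult ln_realpow add_divide_distrib)
  show ?thesis unfolding eq
    using tendsto_add[OF tendsto_mult[OF tendsto_const ln_ssize_lim[OF assms(1)]] tendsto_mult[OF tendsto_const ln_ssize_lim[OF assms(2)]]]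
    by simp
qed

lemma Cst_pos: "0 < Cst \<alpha> \<beta> c M1 M2 N"
  unfolding Cst_def by simp



lemma is_match_subset: "is_match M1 M2 m0 \<Longrightarrow> m \<subseteq> m0 \<Longrightarrow> is_match M1 M2 m"
  unfolding is_match_def by blast

lemma match_finite: "m \<in> matches M1 M2 \<Longrightarrow> finite m"
  unfolding matches_def is_match_def by (auto intro: finite_subset[of _ "{..<M1} \<times> {..<M2}"])

lemma sub_match:
  assumes m0: "m0 \<in> matches M1 M2" and m: "m \<in> matches M1 M2" and c: "card m < card m0"
  shows "\<exists>m''. m'' \<in> matches M1 M2 \<and> m'' \<subseteq> m0 \<and> card m'' = card m \<and> m'' \<noteq> m"
proof -
  have f0: "finite m0" and f: "finite m" using m0 m by (auto intro: match_finite)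
  have cm: "1 \<le> card m" "card m \<le> M2" using m by (auto simp: matches_def)
  have im0: "is_match M1 M2 m0" using m0 by (simp add: matches_def)
  show ?thesis
  proof (cases "m \<subseteq> m0")
    case True
    have "m0 - m \<noteq> {}" using True c by (metis Diff_eq_empty_iff less_irrefl subset_antisym)
    then obtain a where a: "a \<in> m0" "a \<notin> m" by auto
    have "m \<noteq> {}" using cm by auto
    then obtain b where b: "b \<in> m" by auto
    define m'' where "m'' = insert a (m - {b})"
    have sub: "m'' \<subseteq> m0" using True a b by (auto simp: m''_def)
    have card: "card m'' = card m" using a b f cm
      by (simp add: m''_def card_insert_if)
    have "m'' \<noteq> m" using a by (auto simp: m''_def)
    moreover have "m'' \<in> matches M1 M2"
      using is_match_subset[OF im0 sub] card cm by (simp add: matches_def)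
    ultimately show ?thesis using sub card by blast
  next
    case False
    have "card m \<le> card m0" using c by simp
    then obtain T where T: "T \<subseteq> m0" "card T = card m" by (metis obtain_subset_with_card_n)
    have "T \<noteq> m" using T False by auto
    moreover have "T \<in> matches M1 M2"
      using is_match_subset[OF im0 T(1)] T cm by (simp add: matches_def)
    ultimately show ?thesis using T by blast
  qed
qed

lemma Eexp_nonneg:
  assumes "dists M1 P" "dists M2 Q" "dists M1 \<Omega>" "dists M2 \<Psi>" "0 < \<alpha>" "0 < \<beta>"
  shows "0 \<le> Eexp M1 M2 P Q \<Omega> \<Psi> \<alpha> \<beta>"
  unfolding Eexp_def using assms
  by (intro add_nonneg_nonneg sum_nonneg ereal_mult_nn KL_nonneg) (auto simp: dists_def)

lemma types_dists: "n > 0 \<Longrightarrow> dists M (\<lambda>i. etype n (x i))"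
  by (simp add: dists_def etype_dist)

lemma Eexp_ge_sub:
  fixes P Q \<Omega> \<Psi> :: "nat \<Rightarrow> 'a::finite \<Rightarrow> real"
  assumes h: "(P, Q) \<in> hyp_class M1 M2 m0" and m0: "m0 \<in> matches M1 M2" and sub: "m \<subseteq> m0"
    and d: "dists M1 \<Omega>" "dists M2 \<Psi>" and ab: "0 < \<alpha>" "0 < \<beta>"
  shows "Gm m \<Omega> \<Psi> \<alpha> \<beta> \<le> Eexp M1 M2 P Q \<Omega> \<Psi> \<alpha> \<beta>"
proof -
  have im0: "is_match M1 M2 m0" using m0 by (simp add: matches_def)
  have im: "is_match M1 M2 m" by (rule is_match_subset[OF im0 sub])
  have eq: "P i = Q j" if "(i, j) \<in> m" for i j
  proof -
    have "i < M1" "j < M2" "(i, j) \<in> m0" using that im sub by (auto simp: is_match_def)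
    then show ?thesis using h by (auto simp: hyp_class_def)
  qed
  show ?thesis using h d ab by (intro Eexp_ge_Gm[OF _ _ d im eq ab]) (auto simp: hyp_class_def)
qed

lemma accepts_unique:
  "accepts M1 M2 n1 n2 \<alpha> \<beta> l1 l2 m x y \<Longrightarrow> accepts M1 M2 n1 n2 \<alpha> \<beta> l1 l2 m' x y \<Longrightarrow> m = m'"
  unfolding accepts_def by blast

lemma fl_test_Some:
  assumes "fl_test M1 M2 n1 n2 \<alpha> \<beta> l1 l2 x y = Some m"
  shows "accepts M1 M2 n1 n2 \<alpha> \<beta> l1 l2 m x y"
proof -
  have ex: "\<exists>m. accepts M1 M2 n1 n2 \<alpha> \<beta> l1 l2 m x y" using assms
    by (auto simp: fl_test_def split: if_splits)
  then have "m = (THE m. accepts M1 M2 n1 n2 \<alpha> \<beta> l1 l2 m x y)" using assms by (simp add: fl_test_def)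
  moreover have "accepts M1 M2 n1 n2 \<alpha> \<beta> l1 l2 (THE m. accepts M1 M2 n1 n2 \<alpha> \<beta> l1 l2 m x y) x y"
    using ex accepts_unique by (metis theI)
  ultimately show ?thesis by simp
qed

lemma fl_test_None:
  "fl_test M1 M2 n1 n2 \<alpha> \<beta> l1 l2 x y = None \<Longrightarrow> \<not> accepts M1 M2 n1 n2 \<alpha> \<beta> l1 l2 m x y"
  by (auto simp: fl_test_def split: if_splits)



lemma eta_pt:
  fixes P Q :: "nat \<Rightarrow> 'a::finite \<Rightarrow> real"
  assumes n: "n1 > 0" "n2 > 0" and ft: "fl_test M1 M2 n1 n2 \<alpha> \<beta> l1 l2 x y \<noteq> None"
  shows "Er l1 M1 M2 P Q \<alpha> \<beta> \<le> Eexp M1 M2 P Q (\<lambda>i. etype n1 (x i)) (\<lambda>j. etype n2 (y j)) \<alpha> \<beta>"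
proof -
  obtain m where "fl_test M1 M2 n1 n2 \<alpha> \<beta> l1 l2 x y = Some m" using ft by auto
  then have acc: "accepts M1 M2 n1 n2 \<alpha> \<beta> l1 l2 m x y" by (rule fl_test_Some)
  then have mm: "m \<in> matches M1 M2" and S: "Sm m n1 n2 x y \<alpha> \<beta> \<le> ereal l1"
    by (auto simp: accepts_def B_event_def)
  show ?thesis unfolding Er_def
    by (rule INF_lower2[where i="(m, \<lambda>i. etype n1 (x i), \<lambda>j. etype n2 (y j))"])
       (use mm S n in \<open>auto simp: types_dists Sm_def\<close>)
qed

lemma other_accept:
  fixes P Q :: "nat \<Rightarrow> 'a::finite \<Rightarrow> real"
  assumes n: "n1 > 0" "n2 > 0" and ab: "0 < \<alpha>" "0 < \<beta>"
    and h: "(P, Q) \<in> hyp_class M1 M2 m0" and m0: "m0 \<in> matches M1 M2"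
    and mm: "m \<in> matches M1 M2" and ne: "m \<noteq> m0" and B: "B_event M1 M2 n1 n2 \<alpha> \<beta> l1 l2 m x y"
  shows "Gexp l1 M1 M2 (card m0) P Q \<alpha> \<beta> \<le> Eexp M1 M2 P Q (\<lambda>i. etype n1 (x i)) (\<lambda>j. etype n2 (y j)) \<alpha> \<beta>
     \<or> ereal l2 \<le> Eexp M1 M2 P Q (\<lambda>i. etype n1 (x i)) (\<lambda>j. etype n2 (y j)) \<alpha> \<beta>"
proof -
  define \<Omega> where "\<Omega> = (\<lambda>i. etype n1 (x i))"
  define \<Psi> where "\<Psi> = (\<lambda>j. etype n2 (y j))"
  have d: "dists M1 \<Omega>" "dists M2 \<Psi>" using n by (auto simp: \<Omega>_def \<Psi>_def types_dists)
  have key: "ereal l2 \<le> Eexp M1 M2 P Q \<Omega> \<Psi> \<alpha> \<beta>"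
    if m'': "m'' \<in> matches M1 M2" "card m'' = card m" "m'' \<noteq> m" "m'' \<subseteq> m0" for m''
  proof -
    have "ereal l2 < Gm m'' \<Omega> \<Psi> \<alpha> \<beta>" using B m'' by (auto simp: B_event_def Sm_def \<Omega>_def \<Psi>_def)
    also have "\<dots> \<le> Eexp M1 M2 P Q \<Omega> \<Psi> \<alpha> \<beta>" by (rule Eexp_ge_sub[OF h m0 m''(4) d ab])
    finally show ?thesis by simp
  qed
  consider "card m > card m0" | "card m = card m0" | "card m < card m0" by linarith
  then show ?thesis
  proof cases
    case 1
    have S: "Gm m \<Omega> \<Psi> \<alpha> \<beta> \<le> ereal l1" using B by (simp add: B_event_def Sm_def \<Omega>_def \<Psi>_def)
    have "Gexp l1 M1 M2 (card m0) P Q \<alpha> \<beta> \<le> Eexp M1 M2 P Q \<Omega> \<Psi> \<alpha> \<beta>" unfolding Gexp_def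
      by (rule INF_lower2[where i="(m, \<Omega>, \<Psi>)"]) (use mm S d 1 in auto)
    then show ?thesis by (simp add: \<Omega>_def \<Psi>_def)
  next
    case 2
    then show ?thesis using key[OF m0 2[symmetric] ne[symmetric]] by (simp add: \<Omega>_def \<Psi>_def)
  next
    case 3
    then obtain m'' where "m'' \<in> matches M1 M2" "m'' \<subseteq> m0" "card m'' = card m" "m'' \<noteq> m"
      using sub_match[OF m0 mm] by blast
    then show ?thesis using key by (simp add: \<Omega>_def \<Psi>_def)
  qed
qed

lemma beta_pt:
  fixes P Q :: "nat \<Rightarrow> 'a::finite \<Rightarrow> real"
  assumes n: "n1 > 0" "n2 > 0" and ab: "0 < \<alpha>" "0 < \<beta>"
    and h: "(P, Q) \<in> hyp_class M1 M2 m0" and m0: "m0 \<in> matches M1 M2"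
    and ft: "fl_test M1 M2 n1 n2 \<alpha> \<beta> l1 l2 x y \<notin> {Some m0, None}"
  shows "min (Gexp l1 M1 M2 (card m0) P Q \<alpha> \<beta>) (ereal l2)
     \<le> Eexp M1 M2 P Q (\<lambda>i. etype n1 (x i)) (\<lambda>j. etype n2 (y j)) \<alpha> \<beta>"
proof -
  obtain m where fm: "fl_test M1 M2 n1 n2 \<alpha> \<beta> l1 l2 x y = Some m" and ne: "m \<noteq> m0" using ft by auto
  then have acc: "accepts M1 M2 n1 n2 \<alpha> \<beta> l1 l2 m x y" by (intro fl_test_Some)
  then have mm: "m \<in> matches M1 M2" and B: "B_event M1 M2 n1 n2 \<alpha> \<beta> l1 l2 m x y"
    by (auto simp: accepts_def)
  from other_accept[OF n ab h m0 mm ne B] show ?thesis by (auto simp: min_le_iff_disj)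
qed

lemma zeta_pt:
  fixes P Q :: "nat \<Rightarrow> 'a::finite \<Rightarrow> real"
  assumes n: "n1 > 0" "n2 > 0" and ab: "0 < \<alpha>" "0 < \<beta>"
    and h: "(P, Q) \<in> hyp_class M1 M2 m0" and m0: "m0 \<in> matches M1 M2"
    and ft: "fl_test M1 M2 n1 n2 \<alpha> \<beta> l1 l2 x y = None"
  shows "min (min (ereal l1) (ereal l2)) (min (Gexp l1 M1 M2 (card m0) P Q \<alpha> \<beta>) (Fexp l2 M1 M2 (card m0) P Q \<alpha> \<beta>))
     \<le> Eexp M1 M2 P Q (\<lambda>i. etype n1 (x i)) (\<lambda>j. etype n2 (y j)) \<alpha> \<beta>"
proof -
  define \<Omega> where "\<Omega> = (\<lambda>i. etype n1 (x i))"
  define \<Psi> where "\<Psi> = (\<lambda>j. etype n2 (y j))"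
  define E where "E = Eexp M1 M2 P Q \<Omega> \<Psi> \<alpha> \<beta>"
  have d: "dists M1 \<Omega>" "dists M2 \<Psi>" using n by (auto simp: \<Omega>_def \<Psi>_def types_dists)
  have G0: "Gm m0 \<Omega> \<Psi> \<alpha> \<beta> \<le> E" unfolding E_def by (rule Eexp_ge_sub[OF h m0 subset_refl d ab])
  have na: "\<not> accepts M1 M2 n1 n2 \<alpha> \<beta> l1 l2 m x y" for m using ft by (rule fl_test_None)
  have "ereal l1 \<le> E \<or> ereal l2 \<le> E \<or> Gexp l1 M1 M2 (card m0) P Q \<alpha> \<beta> \<le> E \<or> Fexp l2 M1 M2 (card m0) P Q \<alpha> \<beta> \<le> E"
  proof (cases "B_event M1 M2 n1 n2 \<alpha> \<beta> l1 l2 m0 x y")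
    case True
    then obtain m where "m \<in> matches M1 M2" "m \<noteq> m0" "B_event M1 M2 n1 n2 \<alpha> \<beta> l1 l2 m x y"
      using na[of m0] m0 by (auto simp: accepts_def)
    from other_accept[OF n ab h m0 this] show ?thesis by (auto simp: E_def \<Omega>_def \<Psi>_def)
  next
    case False
    then consider "\<not> Gm m0 \<Omega> \<Psi> \<alpha> \<beta> \<le> ereal l1"
      | m' where "m' \<in> matches M1 M2" "card m' = card m0" "m' \<noteq> m0" "Gm m' \<Omega> \<Psi> \<alpha> \<beta> \<le> ereal l2"
      by (auto simp: B_event_def Sm_def \<Omega>_def \<Psi>_def not_less)
    then show ?thesis
    proof cases
      case 1 then show ?thesis using G0 by auto
    next
      case 2
      show ?thesis
      proof (cases "Gm m0 \<Omega> \<Psi> \<alpha> \<beta> \<le> ereal l2")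
        case True
        have "Fexp l2 M1 M2 (card m0) P Q \<alpha> \<beta> \<le> E" unfolding Fexp_def E_def
          by (rule INF_lower2[where i="(m0, m', \<Omega>, \<Psi>)"]) (use 2 True d m0 in auto)
        then show ?thesis by simp
      next
        case False then show ?thesis using G0 by auto
      qed
    qed
  qed
  then show ?thesis unfolding E_def \<Omega>_def \<Psi>_def by (auto simp: min_le_iff_disj)
qed



lemma prob_event_nonneg: "dists M1 P \<Longrightarrow> dists M2 Q \<Longrightarrow> 0 \<le> prob_event M1 M2 n1 n2 P Q A"
  unfolding prob_event_def by (intro sum_nonneg) (auto intro!: mult_nonneg_nonneg sp_nonneg)

lemma rate_bound:
  fixes P Q :: "nat \<Rightarrow> 'a::finite \<Rightarrow> real"
    and A :: "nat \<Rightarrow> (nat \<Rightarrow> nat \<Rightarrow> 'a) \<Rightarrow> (nat \<Rightarrow> nat \<Rightarrow> 'a) \<Rightarrow> bool"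
  assumes ab: "0 < \<alpha>" "0 < \<beta>" and PQ: "dists M1 P" "dists M2 Q" and X0: "0 \<le> X"
    and pt: "\<And>N x y. N > 0 \<Longrightarrow> A N x y \<Longrightarrow>
       X \<le> Eexp M1 M2 P Q (\<lambda>i. etype (ssize \<alpha> N) (x i)) (\<lambda>j. etype (ssize \<beta> N) (y j)) \<alpha> \<beta>"
  shows "X \<le> liminf (\<lambda>N. exprate (prob_event M1 M2 (ssize \<alpha> N) (ssize \<beta> N) P Q (A N)) N)"
proof (rule liminf_from_bound[OF X0 Cst_lim[OF ab] Cst_pos])
  show "0 \<le> prob_event M1 M2 (ssize \<alpha> N) (ssize \<beta> N) P Q (A N)" for N
    using PQ by (rule prob_event_nonneg)
  show "prob_event M1 M2 (ssize \<alpha> N) (ssize \<beta> N) P Q (A N)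
        \<le> Cst \<alpha> \<beta> (card (UNIV::'a set)) M1 M2 N * exp (- real N * e)"
    if "0 < N" "0 \<le> e" "ereal e \<le> X" for N e
    using that by (intro ld_bound[OF that(1) ab PQ that(2)]) (blast intro: order_trans pt)
qed

theorem theorem5:
  fixes \<alpha> \<beta> lam1 lam2 :: real and M1 M2 :: nat
  assumes "1 \<le> M2" and "M2 \<le> M1" and "0 < \<alpha>" and "0 < \<beta>" and "0 < lam1" and "0 < lam2"
  shows "(\<forall>P Q :: nat \<Rightarrow> 'a::finite \<Rightarrow> real. (P, Q) \<in> null_class M1 M2 \<longrightarrow>
            liminf (\<lambda>N. exprate (fl_eta M1 M2 \<alpha> \<beta> lam1 lam2 P Q N) N) \<ge> Er lam1 M1 M2 P Q \<alpha> \<beta>)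
       \<and> (\<forall>m0 \<in> matches M1 M2. \<forall>P Q :: nat \<Rightarrow> 'a::finite \<Rightarrow> real. (P, Q) \<in> hyp_class M1 M2 m0 \<longrightarrow>
            liminf (\<lambda>N. exprate (fl_beta M1 M2 \<alpha> \<beta> lam1 lam2 m0 P Q N) N)
              \<ge> min (Gexp lam1 M1 M2 (card m0) P Q \<alpha> \<beta>) (ereal lam2)
          \<and> liminf (\<lambda>N. exprate (fl_zeta M1 M2 \<alpha> \<beta> lam1 lam2 P Q N) N)
              \<ge> min (min (ereal lam1) (ereal lam2))
                    (min (Gexp lam1 M1 M2 (card m0) P Q \<alpha> \<beta>) (Fexp lam2 M1 M2 (card m0) P Q \<alpha> \<beta>)))"
proof (intro conjI allI impI ballI)
  have ab: "0 < \<alpha>" "0 < \<beta>" using assms by auto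
  have sp: "\<And>N. N > 0 \<Longrightarrow> ssize \<alpha> N > 0" "\<And>N. N > 0 \<Longrightarrow> ssize \<beta> N > 0"
    using ab by (auto intro: ssize_pos)
  fix P Q :: "nat \<Rightarrow> 'a::finite \<Rightarrow> real"
  {
    assume "(P, Q) \<in> null_class M1 M2"
    then have PQ: "dists M1 P" "dists M2 Q" by (auto simp: null_class_def)
    have X0: "0 \<le> Er lam1 M1 M2 P Q \<alpha> \<beta>" unfolding Er_def
      by (rule INF_greatest) (use PQ ab in \<open>auto intro: Eexp_nonneg\<close>)
    show "Er lam1 M1 M2 P Q \<alpha> \<beta> \<le> liminf (\<lambda>N. exprate (fl_eta M1 M2 \<alpha> \<beta> lam1 lam2 P Q N) N)"
      unfolding fl_eta_def
      by (rule rate_bound[OF ab PQ X0]) (use sp in \<open>auto intro: eta_pt\<close>)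
  }
  fix m0 assume m0: "m0 \<in> matches M1 M2"
  {
    fix P Q :: "nat \<Rightarrow> 'a::finite \<Rightarrow> real"
    assume h: "(P, Q) \<in> hyp_class M1 M2 m0"
    then have PQ: "dists M1 P" "dists M2 Q" by (auto simp: hyp_class_def)
    have Gx: "0 \<le> Gexp lam1 M1 M2 (card m0) P Q \<alpha> \<beta>" unfolding Gexp_def
      by (rule INF_greatest) (use PQ ab in \<open>auto intro: Eexp_nonneg\<close>)
    have Fx: "0 \<le> Fexp lam2 M1 M2 (card m0) P Q \<alpha> \<beta>" unfolding Fexp_def
      by (rule INF_greatest) (use PQ ab in \<open>auto intro: Eexp_nonneg\<close>)
    have l: "0 \<le> ereal lam1" "0 \<le> ereal lam2" using assms by auto
    have "min (Gexp lam1 M1 M2 (card m0) P Q \<alpha> \<beta>) (ereal lam2)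
        \<le> liminf (\<lambda>N. exprate (fl_beta M1 M2 \<alpha> \<beta> lam1 lam2 m0 P Q N) N)"
      unfolding fl_beta_def
      by (rule rate_bound[OF ab PQ]) (use Gx l sp ab h m0 in \<open>auto intro: beta_pt\<close>)
    moreover have "min (min (ereal lam1) (ereal lam2))
                    (min (Gexp lam1 M1 M2 (card m0) P Q \<alpha> \<beta>) (Fexp lam2 M1 M2 (card m0) P Q \<alpha> \<beta>))
        \<le> liminf (\<lambda>N. exprate (fl_zeta M1 M2 \<alpha> \<beta> lam1 lam2 P Q N) N)"
      unfolding fl_zeta_def
      by (rule rate_bound[OF ab PQ]) (use Gx Fx l sp ab h m0 in \<open>auto intro: zeta_pt\<close>)
    ultimately have "min (Gexp lam1 M1 M2 (card m0) P Q \<alpha> \<beta>) (ereal lam2)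
        \<le> liminf (\<lambda>N. exprate (fl_beta M1 M2 \<alpha> \<beta> lam1 lam2 m0 P Q N) N) \<and>
      min (min (ereal lam1) (ereal lam2))
                    (min (Gexp lam1 M1 M2 (card m0) P Q \<alpha> \<beta>) (Fexp lam2 M1 M2 (card m0) P Q \<alpha> \<beta>))
        \<le> liminf (\<lambda>N. exprate (fl_zeta M1 M2 \<alpha> \<beta> lam1 lam2 P Q N) N)" ..
  }
  note * = this
  fix P Q :: "nat \<Rightarrow> 'a::finite \<Rightarrow> real"
  assume "(P, Q) \<in> hyp_class M1 M2 m0"
  from *[OF this] show "min (Gexp lam1 M1 M2 (card m0) P Q \<alpha> \<beta>) (ereal lam2)
        \<le> liminf (\<lambda>N. exprate (fl_beta M1 M2 \<alpha> \<beta> lam1 lam2 m0 P Q N) N)" by blast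
  from *[OF \<open>(P, Q) \<in> hyp_class M1 M2 m0\<close>] show "min (min (ereal lam1) (ereal lam2))
                    (min (Gexp lam1 M1 M2 (card m0) P Q \<alpha> \<beta>) (Fexp lam2 M1 M2 (card m0) P Q \<alpha> \<beta>))
        \<le> liminf (\<lambda>N. exprate (fl_zeta M1 M2 \<alpha> \<beta> lam1 lam2 P Q N) N)" by blast
qed

end
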